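(* Let $S$ be a $0$-left cancellative semigroup admitting least common multiples. Then: (i) the set of open ultracharacters of $\mathfrak E(S)$ equals $\{\varphi_\sigma:\sigma \text{ is an open, quasi-maximal string in } S\}$; (ii) the set of ultracharacters of $\mathfrak E(S)$ that are not open equals $\{\hat\theta_u(\varphi): u\in\tilde S,\ \varphi \text{ a ground ultracharacter with } \varphi\in\hat F_u\}$.
   Context: $S$ has zero $0$, $S'=S\setminus\{0\}$; $0$-left cancellative: $st=sr\ne0\Rightarrow t=r$. $\tilde S=S\cup\{1\}$ ($1$ an adjoined identity); $s\mid t$ iff $t\in s\tilde S$; $r$ is a least common multiple of $s,t$ if $sS\cap tS=rS$, $s\mid r$, $t\mid r$; every pair has one. For $s\in S$: $F_s=\{x\in S':sx\ne0\}$, $E_s=sS\setminus\{0\}$, $\theta_s:F_s\to E_s$, $x\mapsto sx$. $\mathcal H(S)$ is the inverse semigroup of partial bijections of $S'$ generated by the $\theta_s$; $\mathfrak E(S)=\{X\subseteq S':\mathrm{id}_X\in\mathcal H(S)\}$ (a semilattice under $\cap$ containing all $E_s,F_s$). A character of $\mathfrak E(S)$ is a nonzero map $\varphi:\mathfrak E(S)\to\{0,1\}$ with $\varphi(\emptyset)=0$, $\varphi(X\cap Y)=\varphi(X)\varphi(Y)$; an ultracharacter is a character $\varphi$ such that $\varphi\le\psi$ pointwise for a character $\psi$ forces $\varphi=\psi$. A string is a nonempty $\sigma\subseteq S$ with $0\notin\sigma$, closed under divisors, any two elements having a common multiple in $\sigma$; it is open if $\sigma=\{s\in S:\exists p\in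 S,\ sp\in\sigma\}$. For a string $\sigma$, $\varphi_\sigma(X)=1$ iff for every $s\in\sigma$ there is $t\in\sigma\cap X$ with $s\mid t$ (else $0$); $\sigma$ is quasi-maximal if $\varphi_\sigma$ is an ultracharacter. For a character $\varphi$ let $\sigma_\varphi=\{s\in S:\varphi(E_s)=1\}$; $\varphi$ is open if $\sigma_\varphi$ is a nonempty open string, and $\varphi$ is a ground character if $\sigma_\varphi=\emptyset$. Dual representation: for $s\in S$, $\hat F_s=\{\varphi:\varphi(F_s)=1\}$ and for $\varphi\in\hat F_s$, $\hat\theta_s(\varphi)(X)=\varphi(\{y\in S':sy\in X\})$ for $X\in\mathfrak E(S)$; $\hat F_1$ is the set of all characters and $\hat\theta_1$ is the identity. *)

theory Defs
  imports Main
begin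

text \<open>A semigroup S is represented by a type 'a (S = UNIV) with a multiplication m
and a distinguished zero element z.  Elements of S~ = S \<union> {1} are 'a option,
None standing for the adjoined identity 1.\<close>

definition semigroup_with_zero :: "('a \<Rightarrow> 'a \<Rightarrow> 'a) \<Rightarrow> 'a \<Rightarrow> bool" where
  "semigroup_with_zero m z \<longleftrightarrow>
     (\<forall>x y w. m (m x y) w = m x (m y w)) \<and> (\<forall>x. m z x = z \<and> m x z = z)"

definition zero_left_cancellative :: "('a \<Rightarrow> 'a \<Rightarrow> 'a) \<Rightarrow> 'a \<Rightarrow> bool" where
  "zero_left_cancellative m z \<longleftrightarrow> (\<forall>s t r. m s t = m s r \<and> m s t \<noteq> z \<longrightarrow> t = r)"

text \<open>s divides t iff t \<in> s S~, i.e. t = s or t = s x for some x.\<close>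
definition sdvd :: "('a \<Rightarrow> 'a \<Rightarrow> 'a) \<Rightarrow> 'a \<Rightarrow> 'a \<Rightarrow> bool" where
  "sdvd m s t \<longleftrightarrow> t = s \<or> (\<exists>x. t = m s x)"

definition principal :: "('a \<Rightarrow> 'a \<Rightarrow> 'a) \<Rightarrow> 'a \<Rightarrow> 'a set" where
  "principal m s = range (m s)"

definition admits_lcm :: "('a \<Rightarrow> 'a \<Rightarrow> 'a) \<Rightarrow> bool" where
  "admits_lcm m \<longleftrightarrow> (\<forall>s t. \<exists>r. principal m s \<inter> principal m t = principal m r
                                   \<and> sdvd m s r \<and> sdvd m t r)"

definition Fs :: "('a \<Rightarrow> 'a \<Rightarrow> 'a) \<Rightarrow> 'a \<Rightarrow> 'a \<Rightarrow> 'a set" where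
  "Fs m z s = {x. x \<noteq> z \<and> m s x \<noteq> z}"

definition Es :: "('a \<Rightarrow> 'a \<Rightarrow> 'a) \<Rightarrow> 'a \<Rightarrow> 'a \<Rightarrow> 'a set" where
  "Es m z s = principal m s - {z}"

definition theta :: "('a \<Rightarrow> 'a \<Rightarrow> 'a) \<Rightarrow> 'a \<Rightarrow> 'a \<Rightarrow> ('a \<rightharpoonup> 'a)" where
  "theta m z s = (\<lambda>x. if x \<in> Fs m z s then Some (m s x) else None)"

definition pinv :: "('a \<rightharpoonup> 'a) \<Rightarrow> ('a \<rightharpoonup> 'a)" where
  "pinv f = (\<lambda>y. if \<exists>x. f x = Some y then Some (THE x. f x = Some y) else None)"

inductive_set Hull :: "('a \<Rightarrow> 'a \<Rightarrow> 'a) \<Rightarrow> 'a \<Rightarrow> ('a \<rightharpoonup> 'a) set"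
  for m :: "'a \<Rightarrow> 'a \<Rightarrow> 'a" and z :: 'a where
  gen: "theta m z s \<in> Hull m z"
| inv: "f \<in> Hull m z \<Longrightarrow> pinv f \<in> Hull m z"
| comp: "f \<in> Hull m z \<Longrightarrow> g \<in> Hull m z \<Longrightarrow> f \<circ>\<^sub>m g \<in> Hull m z"

definition pid :: "'a set \<Rightarrow> ('a \<rightharpoonup> 'a)" where
  "pid X = (\<lambda>x. if x \<in> X then Some x else None)"

definition Ecal :: "('a \<Rightarrow> 'a \<Rightarrow> 'a) \<Rightarrow> 'a \<Rightarrow> 'a set set" where
  "Ecal m z = {X. X \<subseteq> - {z} \<and> pid X \<in> Hull m z}"

text \<open>Characters of E(S) are represented as maps 'a set \<Rightarrow> bool which are False
outside E(S) (so that equality and the pointwise order are those on E(S)).\<close>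
definition character :: "('a \<Rightarrow> 'a \<Rightarrow> 'a) \<Rightarrow> 'a \<Rightarrow> ('a set \<Rightarrow> bool) \<Rightarrow> bool" where
  "character m z \<phi> \<longleftrightarrow>
     (\<forall>X. X \<notin> Ecal m z \<longrightarrow> \<not> \<phi> X) \<and>
     (\<exists>X \<in> Ecal m z. \<phi> X) \<and> \<not> \<phi> {} \<and>
     (\<forall>X \<in> Ecal m z. \<forall>Y \<in> Ecal m z. \<phi> (X \<inter> Y) = (\<phi> X \<and> \<phi> Y))"

definition ultracharacter :: "('a \<Rightarrow> 'a \<Rightarrow> 'a) \<Rightarrow> 'a \<Rightarrow> ('a set \<Rightarrow> bool) \<Rightarrow> bool" where
  "ultracharacter m z \<phi> \<longleftrightarrow> character m z \<phi> \<and>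
     (\<forall>\<psi>. character m z \<psi> \<and> (\<forall>X \<in> Ecal m z. \<phi> X \<longrightarrow> \<psi> X) \<longrightarrow> \<phi> = \<psi>)"

definition is_string :: "('a \<Rightarrow> 'a \<Rightarrow> 'a) \<Rightarrow> 'a \<Rightarrow> 'a set \<Rightarrow> bool" where
  "is_string m z \<sigma> \<longleftrightarrow> \<sigma> \<noteq> {} \<and> z \<notin> \<sigma> \<and>
     (\<forall>s t. t \<in> \<sigma> \<and> sdvd m s t \<longrightarrow> s \<in> \<sigma>) \<and>
     (\<forall>s \<in> \<sigma>. \<forall>t \<in> \<sigma>. \<exists>r \<in> \<sigma>. sdvd m s r \<and> sdvd m t r)"

definition open_string :: "('a \<Rightarrow> 'a \<Rightarrow> 'a) \<Rightarrow> 'a set \<Rightarrow> bool" where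
  "open_string m \<sigma> \<longleftrightarrow> \<sigma> = {s. \<exists>p. m s p \<in> \<sigma>}"

definition phi_str :: "('a \<Rightarrow> 'a \<Rightarrow> 'a) \<Rightarrow> 'a \<Rightarrow> 'a set \<Rightarrow> ('a set \<Rightarrow> bool)" where
  "phi_str m z \<sigma> = (\<lambda>X. X \<in> Ecal m z \<and> (\<forall>s \<in> \<sigma>. \<exists>t \<in> \<sigma> \<inter> X. sdvd m s t))"

definition quasi_maximal :: "('a \<Rightarrow> 'a \<Rightarrow> 'a) \<Rightarrow> 'a \<Rightarrow> 'a set \<Rightarrow> bool" where
  "quasi_maximal m z \<sigma> \<longleftrightarrow> ultracharacter m z (phi_str m z \<sigma>)"

definition sigma_char :: "('a \<Rightarrow> 'a \<Rightarrow> 'a) \<Rightarrow> 'a \<Rightarrow> ('a set \<Rightarrow> bool) \<Rightarrow> 'a set" where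
  "sigma_char m z \<phi> = {s. \<phi> (Es m z s)}"

definition open_character :: "('a \<Rightarrow> 'a \<Rightarrow> 'a) \<Rightarrow> 'a \<Rightarrow> ('a set \<Rightarrow> bool) \<Rightarrow> bool" where
  "open_character m z \<phi> \<longleftrightarrow> character m z \<phi> \<and> sigma_char m z \<phi> \<noteq> {} \<and>
     is_string m z (sigma_char m z \<phi>) \<and> open_string m (sigma_char m z \<phi>)"

definition ground_character :: "('a \<Rightarrow> 'a \<Rightarrow> 'a) \<Rightarrow> 'a \<Rightarrow> ('a set \<Rightarrow> bool) \<Rightarrow> bool" where
  "ground_character m z \<phi> \<longleftrightarrow> character m z \<phi> \<and> sigma_char m z \<phi> = {}"

definition hatF :: "('a \<Rightarrow> 'a \<Rightarrow> 'a) \<Rightarrow> 'a \<Rightarrow> 'a option \<Rightarrow> ('a set \<Rightarrow> bool) set" where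
  "hatF m z u = (case u of None \<Rightarrow> {\<phi>. character m z \<phi>}
                 | Some s \<Rightarrow> {\<phi>. character m z \<phi> \<and> \<phi> (Fs m z s)})"

definition hat_theta :: "('a \<Rightarrow> 'a \<Rightarrow> 'a) \<Rightarrow> 'a \<Rightarrow> 'a option \<Rightarrow> ('a set \<Rightarrow> bool) \<Rightarrow> ('a set \<Rightarrow> bool)" where
  "hat_theta m z u \<phi> = (case u of None \<Rightarrow> \<phi>
     | Some s \<Rightarrow> (\<lambda>X. X \<in> Ecal m z \<and> \<phi> {y. y \<noteq> z \<and> m s y \<in> X}))"

end

theory Submission
  imports Defs
begin

locale S0 =
  fixes m :: "'a \<Rightarrow> 'a \<Rightarrow> 'a" and z :: 'a
  assumes assoc: "m (m x y) w = m x (m y w)"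
  and zl: "m z x = z" and zr: "m x z = z"
  and canc: "m s t = m s r \<Longrightarrow> m s t \<noteq> z \<Longrightarrow> t = r"
  and lcm: "\<exists>r. principal m s \<inter> principal m t = principal m r \<and> sdvd m s r \<and> sdvd m t r"
begin

definition mul1 :: "'a option \<Rightarrow> 'a \<Rightarrow> 'a" where
  "mul1 c y = (case c of None \<Rightarrow> y | Some a \<Rightarrow> m a y)"

definition omul :: "'a option \<Rightarrow> 'a option \<Rightarrow> 'a option" where
  "omul c d = (case c of None \<Rightarrow> d | Some a \<Rightarrow> (case d of None \<Rightarrow> Some a | Some b \<Rightarrow> Some (m a b)))"

lemma mul1_None[simp]: "mul1 None y = y" and mul1_Some[simp]: "mul1 (Some a) y = m a y"
  by (auto simp: mul1_def)

lemma mul1_omul: "mul1 (omul c d) y = mul1 c (mul1 d y)"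
  by (auto simp: omul_def mul1_def assoc split: option.splits)

lemma mul1_assoc: "mul1 c (m y q) = m (mul1 c y) q"
  by (auto simp: mul1_def assoc split: option.splits)

lemma mul1_z[simp]: "mul1 c z = z"
  by (auto simp: mul1_def zr split: option.splits)

lemma mul1_cancel: "mul1 c y = mul1 c y' \<Longrightarrow> mul1 c y \<noteq> z \<Longrightarrow> y = y'"
  by (cases c) (simp, metis canc mul1_Some)

definition Inv :: "('a \<rightharpoonup> 'a) \<Rightarrow> bool" where
  "Inv f \<longleftrightarrow> (\<exists>a b Y. z \<notin> Y \<and> (\<forall>y q. m y q \<in> Y \<longrightarrow> y \<in> Y)
     \<and> (\<forall>y\<in>Y. mul1 b y \<noteq> z \<and> mul1 a y \<noteq> z) \<and> dom f = mul1 b ` Y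
     \<and> (\<forall>y\<in>Y. f (mul1 b y) = Some (mul1 a y)))"

lemma Inv_gen: "Inv (theta m z s)"
  unfolding Inv_def
  apply (rule exI[of _ "Some s"], rule exI[of _ None], rule exI[of _ "Fs m z s"])
proof (intro conjI)
  show "\<forall>y q. m y q \<in> Fs m z s \<longrightarrow> y \<in> Fs m z s"
  proof (intro allI impI)
    fix y q assume "m y q \<in> Fs m z s"
    then have a: "m y q \<noteq> z" "m (m s y) q \<noteq> z" by (auto simp: Fs_def assoc)
    have "y \<noteq> z" using a(1) zl by metis
    moreover have "m s y \<noteq> z" using a(2) zl by metis
    ultimately show "y \<in> Fs m z s" by (simp add: Fs_def)
  qed
  show "z \<notin> Fs m z s" by (simp add: Fs_def)
  show "\<forall>y\<in>Fs m z s. mul1 None y \<noteq> z \<and> mul1 (Some s) y \<noteq> z" by (simp add: Fs_def)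
  show "dom (theta m z s) = mul1 None ` Fs m z s" by (simp add: theta_def dom_def)
  show "\<forall>y\<in>Fs m z s. theta m z s (mul1 None y) = Some (mul1 (Some s) y)" by (simp add: theta_def)
qed

lemma Inv_val:
  assumes "\<forall>y\<in>Y. mul1 b y \<noteq> z \<and> mul1 a y \<noteq> z" "dom f = mul1 b ` Y"
    "\<forall>y\<in>Y. f (mul1 b y) = Some (mul1 a y)" "f x = Some v"
  shows "\<exists>y\<in>Y. x = mul1 b y \<and> v = mul1 a y"
proof -
  have "x \<in> dom f" using assms(4) by auto
  then obtain y where "y \<in> Y" "x = mul1 b y" using assms(2) by auto
  then show ?thesis using assms(3,4) by auto
qed

lemma Inv_inv: assumes "Inv f" shows "Inv (pinv f)"
proof -
  obtain a b Y where Y: "z \<notin> Y" "\<forall>y q. m y q \<in> Y \<longrightarrow> y \<in> Y"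
     "\<forall>y\<in>Y. mul1 b y \<noteq> z \<and> mul1 a y \<noteq> z" "dom f = mul1 b ` Y"
     "\<forall>y\<in>Y. f (mul1 b y) = Some (mul1 a y)"
    using assms unfolding Inv_def by (elim exE conjE) (rule that; assumption)
  have val: "\<And>x v. f x = Some v \<Longrightarrow> \<exists>y\<in>Y. x = mul1 b y \<and> v = mul1 a y"
    using Inv_val[OF Y(3,4,5)] by blast
  have d: "dom (pinv f) = mul1 a ` Y"
  proof
    show "dom (pinv f) \<subseteq> mul1 a ` Y"
    proof
      fix v assume "v \<in> dom (pinv f)"
      then obtain x where "f x = Some v" unfolding pinv_def dom_def by (auto split: if_splits)
      then show "v \<in> mul1 a ` Y" using val by blast
    qed
    show "mul1 a ` Y \<subseteq> dom (pinv f)"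
    proof
      fix v assume "v \<in> mul1 a ` Y"
      then obtain y where "y \<in> Y" "v = mul1 a y" by blast
      then have "f (mul1 b y) = Some v" using Y(5) by simp
      then show "v \<in> dom (pinv f)" unfolding pinv_def dom_def by auto
    qed
  qed
  have v: "\<forall>y\<in>Y. pinv f (mul1 a y) = Some (mul1 b y)"
  proof
    fix y assume y: "y \<in> Y"
    have u: "\<And>x. f x = Some (mul1 a y) \<Longrightarrow> x = mul1 b y"
    proof -
      fix x assume "f x = Some (mul1 a y)"
      then obtain y' where "y' \<in> Y" "x = mul1 b y'" "mul1 a y = mul1 a y'" using val by blast
      moreover have "mul1 a y \<noteq> z" using Y(3) y by blast
      moreover then have "y = y'" using mul1_cancel calculation(3) by blast
      ultimately show "x = mul1 b y" by simp
    qed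
    have e: "f (mul1 b y) = Some (mul1 a y)" using Y(5) y by simp
    have "(THE x. f x = Some (mul1 a y)) = mul1 b y"
      using e u by (rule the_equality)
    then show "pinv f (mul1 a y) = Some (mul1 b y)"
      using e unfolding pinv_def by auto
  qed
  show ?thesis unfolding Inv_def
    using Y d v by blast
qed


lemma InvI:
  assumes "z \<notin> Y" "\<forall>y q. m y q \<in> Y \<longrightarrow> y \<in> Y" "\<forall>y\<in>Y. mul1 b y \<noteq> z \<and> mul1 a y \<noteq> z"
    "\<And>x v. h x = Some v \<Longrightarrow> \<exists>y\<in>Y. x = mul1 b y"
    "\<And>y. y\<in>Y \<Longrightarrow> h (mul1 b y) = Some (mul1 a y)"
  shows "Inv h"
proof -
  have "dom h = mul1 b ` Y"
  proof
    show "dom h \<subseteq> mul1 b ` Y" using assms(4) by blast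
    show "mul1 b ` Y \<subseteq> dom h" using assms(5) by blast
  qed
  then show ?thesis unfolding Inv_def
    apply (rule_tac x=a in exI, rule_tac x=b in exI, rule_tac x=Y in exI)
    using assms by simp
qed

lemma InvD:
  assumes "Inv f"
  shows "\<exists>a b Y. z \<notin> Y \<and> (\<forall>y q. m y q \<in> Y \<longrightarrow> y \<in> Y)
     \<and> (\<forall>y\<in>Y. mul1 b y \<noteq> z \<and> mul1 a y \<noteq> z)
     \<and> (\<forall>x v. f x = Some v \<longrightarrow> (\<exists>y\<in>Y. x = mul1 b y \<and> v = mul1 a y))
     \<and> (\<forall>y\<in>Y. f (mul1 b y) = Some (mul1 a y))"
proof -
  obtain a b Y where Y: "z \<notin> Y" "\<forall>y q. m y q \<in> Y \<longrightarrow> y \<in> Y"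
     "\<forall>y\<in>Y. mul1 b y \<noteq> z \<and> mul1 a y \<noteq> z" "dom f = mul1 b ` Y"
     "\<forall>y\<in>Y. f (mul1 b y) = Some (mul1 a y)"
    using assms unfolding Inv_def by (elim exE conjE) (rule that; assumption)
  have val: "\<forall>x v. f x = Some v \<longrightarrow> (\<exists>y\<in>Y. x = mul1 b y \<and> v = mul1 a y)"
    using Inv_val[OF Y(3,4,5)] by blast
  show ?thesis
    apply (rule exI[of _ a], rule exI[of _ b], rule exI[of _ Y])
    using Y(1,2,3,5) val by simp
qed

lemma sdvd_opt: assumes "sdvd m s r" shows "\<exists>c. \<forall>v. m s (mul1 c v) = m r v"
proof -
  { assume "r = s" then have ?thesis by (intro exI[of _ None]) simp }
  moreover
  { fix x assume "r = m s x" then have ?thesis by (intro exI[of _ "Some x"]) (simp add: assoc) }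
  ultimately show ?thesis using assms unfolding sdvd_def by blast
qed

lemma comp_Some: "(f \<circ>\<^sub>m g) x = Some v \<longleftrightarrow> (\<exists>u. g x = Some u \<and> f u = Some v)"
  by (auto simp: map_comp_def split: option.splits)

lemma Inv_comp: assumes "Inv f" "Inv g" shows "Inv (f \<circ>\<^sub>m g)"
proof -
  obtain a b Y where Y: "z \<notin> Y" "\<forall>y q. m y q \<in> Y \<longrightarrow> y \<in> Y"
     "\<forall>y\<in>Y. mul1 b y \<noteq> z \<and> mul1 a y \<noteq> z"
     "\<forall>x v. f x = Some v \<longrightarrow> (\<exists>y\<in>Y. x = mul1 b y \<and> v = mul1 a y)"
     "\<forall>y\<in>Y. f (mul1 b y) = Some (mul1 a y)"
    using InvD[OF assms(1)] by (elim exE conjE) (rule that; assumption)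
  obtain a2 b2 Y2 where Y2: "z \<notin> Y2" "\<forall>y q. m y q \<in> Y2 \<longrightarrow> y \<in> Y2"
     "\<forall>y\<in>Y2. mul1 b2 y \<noteq> z \<and> mul1 a2 y \<noteq> z"
     "\<forall>x v. g x = Some v \<longrightarrow> (\<exists>y\<in>Y2. x = mul1 b2 y \<and> v = mul1 a2 y)"
     "\<forall>y\<in>Y2. g (mul1 b2 y) = Some (mul1 a2 y)"
    using InvD[OF assms(2)] by (elim exE conjE) (rule that; assumption)
  show ?thesis
  proof (cases b)
    case None
    show ?thesis
    proof (rule InvI[where Y="{y\<in>Y2. mul1 a2 y \<in> Y}" and b=b2 and a="omul a a2"])
      show "z \<notin> {y \<in> Y2. mul1 a2 y \<in> Y}" using Y2(1) by blast
      show "\<forall>y q. m y q \<in> {y \<in> Y2. mul1 a2 y \<in> Y} \<longrightarrow> y \<in> {y \<in> Y2. mul1 a2 y \<in> Y}"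
      proof (intro allI impI)
        fix y q assume h: "m y q \<in> {y \<in> Y2. mul1 a2 y \<in> Y}"
        then have "y \<in> Y2" using Y2(2) by blast
        moreover have "m (mul1 a2 y) q \<in> Y" using h by (simp add: mul1_assoc)
        then have "mul1 a2 y \<in> Y" using Y(2) by blast
        ultimately show "y \<in> {y \<in> Y2. mul1 a2 y \<in> Y}" by blast
      qed
      show "\<forall>y\<in>{y \<in> Y2. mul1 a2 y \<in> Y}. mul1 b2 y \<noteq> z \<and> mul1 (omul a a2) y \<noteq> z"
        using Y2(3) Y(3) by (auto simp: mul1_omul)
      show "\<exists>y\<in>{y \<in> Y2. mul1 a2 y \<in> Y}. x = mul1 b2 y" if hh: "(f \<circ>\<^sub>m g) x = Some v" for x v
      proof -
        obtain u where u: "g x = Some u" "f u = Some v" using comp_Some[THEN iffD1, OF hh] by blast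
        obtain y where y: "y \<in> Y2" "x = mul1 b2 y" "u = mul1 a2 y" using Y2(4)[rule_format, OF u(1)] by blast
        obtain w where "w \<in> Y" "u = mul1 b w" using Y(4)[rule_format, OF u(2)] by blast
        then have "u \<in> Y" using None by simp
        then have "y \<in> {y \<in> Y2. mul1 a2 y \<in> Y}" using y by simp
        then show ?thesis using y(2) by blast
      qed
      show "(f \<circ>\<^sub>m g) (mul1 b2 y) = Some (mul1 (omul a a2) y)" if "y \<in> {y \<in> Y2. mul1 a2 y \<in> Y}" for y
      proof -
        have "g (mul1 b2 y) = Some (mul1 a2 y)" using that Y2(5) by simp
        moreover have "f (mul1 a2 y) = Some (mul1 a (mul1 a2 y))"
          using that Y(5)[rule_format, of "mul1 a2 y"] None by simp
        ultimately show ?thesis by (simp add: mul1_omul)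
      qed
    qed
  next
    case (Some t)
    show ?thesis
    proof (cases a2)
      case None
      show ?thesis
      proof (rule InvI[where Y="{w\<in>Y. mul1 b w \<in> Y2}" and b="omul b2 b" and a="a"])
        show "z \<notin> {w\<in>Y. mul1 b w \<in> Y2}" using Y(1) by blast
        show "\<forall>y q. m y q \<in> {w\<in>Y. mul1 b w \<in> Y2} \<longrightarrow> y \<in> {w\<in>Y. mul1 b w \<in> Y2}"
        proof (intro allI impI)
          fix y q assume h: "m y q \<in> {w\<in>Y. mul1 b w \<in> Y2}"
          then have "y \<in> Y" using Y(2) by blast
          moreover have "m (mul1 b y) q \<in> Y2" using h by (simp add: mul1_assoc)
          then have "mul1 b y \<in> Y2" using Y2(2) by blast
          ultimately show "y \<in> {w\<in>Y. mul1 b w \<in> Y2}" by blast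
        qed
        show "\<forall>y\<in>{w\<in>Y. mul1 b w \<in> Y2}. mul1 (omul b2 b) y \<noteq> z \<and> mul1 a y \<noteq> z"
          using Y2(3) Y(3) by (auto simp: mul1_omul)
        show "\<exists>y\<in>{w\<in>Y. mul1 b w \<in> Y2}. x = mul1 (omul b2 b) y" if hh: "(f \<circ>\<^sub>m g) x = Some v" for x v
        proof -
          obtain u where u: "g x = Some u" "f u = Some v" using comp_Some[THEN iffD1, OF hh] by blast
          obtain y where y: "y \<in> Y2" "x = mul1 b2 y" "u = mul1 a2 y" using Y2(4)[rule_format, OF u(1)] by blast
          obtain w where w: "w \<in> Y" "u = mul1 b w" using Y(4)[rule_format, OF u(2)] by blast
          have "y = u" using y(3) None by simp
          then have "w \<in> {w\<in>Y. mul1 b w \<in> Y2}" using w y(1) by simp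
          moreover have "x = mul1 (omul b2 b) w" using y(2) w(2) \<open>y = u\<close> by (simp add: mul1_omul)
          ultimately show ?thesis by blast
        qed
        show "(f \<circ>\<^sub>m g) (mul1 (omul b2 b) y) = Some (mul1 a y)" if "y \<in> {w\<in>Y. mul1 b w \<in> Y2}" for y
        proof -
          have "g (mul1 (omul b2 b) y) = Some (mul1 b y)" using that Y2(5) None by (simp add: mul1_omul)
          moreover have "f (mul1 b y) = Some (mul1 a y)" using that Y(5) by blast
          ultimately show ?thesis by simp
        qed
      qed
    next
      case (Some s)
      note bt = \<open>b = Some t\<close>
      obtain r where r: "principal m s \<inter> principal m t = principal m r" "sdvd m s r" "sdvd m t r"
        using lcm by blast
      obtain c where c: "\<And>v. m s (mul1 c v) = m r v" using sdvd_opt[OF r(2)] by blast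
      obtain d where d: "\<And>v. m t (mul1 d v) = m r v" using sdvd_opt[OF r(3)] by blast
      let ?Y = "{v. v \<noteq> z \<and> mul1 c v \<in> Y2 \<and> mul1 d v \<in> Y}"
      show ?thesis
      proof (rule InvI[where Y="?Y" and b="omul b2 c" and a="omul a d"])
        show "z \<notin> ?Y" by blast
        show "\<forall>y q. m y q \<in> ?Y \<longrightarrow> y \<in> ?Y"
        proof (intro allI impI)
          fix y q assume h: "m y q \<in> ?Y"
          then have "y \<noteq> z" using zl by force
          moreover have "m (mul1 c y) q \<in> Y2" using h by (simp add: mul1_assoc)
          then have "mul1 c y \<in> Y2" using Y2(2) by blast
          moreover have "m (mul1 d y) q \<in> Y" using h by (simp add: mul1_assoc)
          then have "mul1 d y \<in> Y" using Y(2) by blast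
          ultimately show "y \<in> ?Y" by blast
        qed
        show "\<forall>y\<in>?Y. mul1 (omul b2 c) y \<noteq> z \<and> mul1 (omul a d) y \<noteq> z"
          using Y2(3) Y(3) by (auto simp: mul1_omul)
        show "\<exists>y\<in>?Y. x = mul1 (omul b2 c) y" if hh: "(f \<circ>\<^sub>m g) x = Some v0" for x v0
        proof -
          obtain u where u: "g x = Some u" "f u = Some v0" using comp_Some[THEN iffD1, OF hh] by blast
          obtain y where y: "y \<in> Y2" "x = mul1 b2 y" "u = m s y" using Y2(4)[rule_format, OF u(1)] Some by auto
          obtain w where w: "w \<in> Y" "u = m t w" using Y(4)[rule_format, OF u(2)] bt by auto
          have nz: "m s y \<noteq> z" using Y2(3) y(1) Some by auto
          have "m s y \<in> principal m s \<inter> principal m t" unfolding principal_def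
            using y(3) w(2) by (metis IntI rangeI)
          then obtain v where v: "m s y = m r v" using r(1) unfolding principal_def by auto
          have yv: "y = mul1 c v" using canc[of s y "mul1 c v"] nz v c by metis
          have wv: "w = mul1 d v" using canc[of t w "mul1 d v"] nz v d y(3) w(2) by metis
          have "v \<noteq> z" using nz v zr by metis
          then have "v \<in> ?Y" using yv wv y(1) w(1) by blast
          moreover have "x = mul1 (omul b2 c) v" using y(2) yv by (simp add: mul1_omul)
          ultimately show ?thesis by blast
        qed
        show "(f \<circ>\<^sub>m g) (mul1 (omul b2 c) v) = Some (mul1 (omul a d) v)" if "v \<in> ?Y" for v
        proof -
          have "g (mul1 (omul b2 c) v) = Some (m s (mul1 c v))"
            using that Y2(5)[rule_format, of "mul1 c v"] Some by (simp add: mul1_omul)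
          also have "m s (mul1 c v) = m t (mul1 d v)" using c d by simp
          finally have g1: "g (mul1 (omul b2 c) v) = Some (m t (mul1 d v))" .
          have "f (m t (mul1 d v)) = Some (mul1 a (mul1 d v))" using that Y(5)[rule_format, of "mul1 d v"] bt by simp
          then show ?thesis using g1 by (simp add: mul1_omul)
        qed
      qed
    qed
  qed
qed

lemma Inv_Hull: "f \<in> Hull m z \<Longrightarrow> Inv f"
  by (induction rule: Hull.induct) (auto intro: Inv_gen Inv_inv Inv_comp)


lemma Hull_inj: assumes "f \<in> Hull m z" "f x = Some v" "f x' = Some v" shows "x = x'"
proof -
  obtain a b Y where Y: "\<forall>y\<in>Y. mul1 b y \<noteq> z \<and> mul1 a y \<noteq> z"
     "\<forall>x v. f x = Some v \<longrightarrow> (\<exists>y\<in>Y. x = mul1 b y \<and> v = mul1 a y)"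
    using InvD[OF Inv_Hull[OF assms(1)]] by blast
  obtain y where y: "y \<in> Y" "x = mul1 b y" "v = mul1 a y" using Y(2) assms(2) by blast
  obtain y' where y': "y' \<in> Y" "x' = mul1 b y'" "v = mul1 a y'" using Y(2) assms(3) by blast
  have "mul1 a y \<noteq> z" using Y(1) y(1) by blast
  then have "y = y'" using mul1_cancel y(3) y'(3) by metis
  then show ?thesis using y y' by simp
qed

lemma Hull_zdom: assumes "f \<in> Hull m z" shows "f z = None"
proof (rule ccontr)
  assume "f z \<noteq> None"
  then obtain v where v: "f z = Some v" by blast
  obtain a b Y where Y: "\<forall>y\<in>Y. mul1 b y \<noteq> z \<and> mul1 a y \<noteq> z"
     "\<forall>x v. f x = Some v \<longrightarrow> (\<exists>y\<in>Y. x = mul1 b y \<and> v = mul1 a y)"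
    using InvD[OF Inv_Hull[OF assms(1)]] by blast
  obtain y where y: "y \<in> Y" "z = mul1 b y" using Y(2) v by blast
  then show False using Y(1) by metis
qed

lemma dom_Ecal: assumes "f \<in> Hull m z" shows "dom f \<in> Ecal m z"
proof -
  have "pid (dom f) = pinv f \<circ>\<^sub>m f"
  proof
    fix x
    show "pid (dom f) x = (pinv f \<circ>\<^sub>m f) x"
    proof (cases "f x")
      case None
      then show ?thesis by (simp add: pid_def map_comp_def dom_def)
    next
      case (Some v)
      have u: "\<And>x'. f x' = Some v \<Longrightarrow> x' = x" using Hull_inj[OF assms _ Some] by blast
      have "(THE x'. f x' = Some v) = x"
        by (rule the_equality) (rule Some, rule u)
      moreover have "\<exists>x'. f x' = Some v" using Some by blast
      ultimately have "pinv f v = Some x" unfolding pinv_def by simp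
      moreover have "x \<in> dom f" using Some by blast
      ultimately show ?thesis using Some by (simp add: pid_def map_comp_def)
    qed
  qed
  moreover have "pinv f \<circ>\<^sub>m f \<in> Hull m z" using assms by (simp add: Hull.comp Hull.inv)
  moreover have "dom f \<subseteq> - {z}" using Hull_zdom[OF assms] by auto
  ultimately show ?thesis unfolding Ecal_def by simp
qed

lemma dom_pinv: "dom (pinv f) = {v. \<exists>x. f x = Some v}"
  by (auto simp: pinv_def dom_def)

lemma Ecal_inter: assumes "X \<in> Ecal m z" "Y \<in> Ecal m z" shows "X \<inter> Y \<in> Ecal m z"
proof -
  have "pid (X \<inter> Y) = pid X \<circ>\<^sub>m pid Y" by (auto simp: pid_def map_comp_def)
  moreover have "pid X \<circ>\<^sub>m pid Y \<in> Hull m z" using assms unfolding Ecal_def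
    by (simp add: Hull.comp)
  ultimately show ?thesis using assms unfolding Ecal_def by auto
qed

lemma Fs_Ecal: "Fs m z s \<in> Ecal m z"
proof -
  have "dom (theta m z s) = Fs m z s" unfolding theta_def dom_def by simp
  then show ?thesis using dom_Ecal[OF Hull.gen[of m z s]] by simp
qed

lemma Es_Ecal: "Es m z s \<in> Ecal m z"
proof -
  have "{v. \<exists>x. theta m z s x = Some v} = Es m z s"
  proof
    show "{v. \<exists>x. theta m z s x = Some v} \<subseteq> Es m z s"
      unfolding theta_def Es_def Fs_def principal_def by (auto split: if_splits)
    show "Es m z s \<subseteq> {v. \<exists>x. theta m z s x = Some v}"
    proof
      fix v assume "v \<in> Es m z s"
      then obtain x where x: "v = m s x" "v \<noteq> z" unfolding Es_def principal_def by auto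
      then have "x \<noteq> z" using zr by metis
      then have "theta m z s x = Some v" using x unfolding theta_def Fs_def by simp
      then show "v \<in> {v. \<exists>x. theta m z s x = Some v}" by blast
    qed
  qed
  then have "dom (pinv (theta m z s)) = Es m z s" unfolding dom_pinv by simp
  then show ?thesis using dom_Ecal[OF Hull.inv[OF Hull.gen[of m z s]]] by simp
qed

definition pre :: "'a \<Rightarrow> 'a set \<Rightarrow> 'a set" where
  "pre s X = {y. y \<noteq> z \<and> m s y \<in> X}"

definition img :: "'a \<Rightarrow> 'a set \<Rightarrow> 'a set" where
  "img s Y = {v. \<exists>y\<in>Y. y \<noteq> z \<and> m s y \<noteq> z \<and> v = m s y}"

lemma Ecal_sub: "X \<in> Ecal m z \<Longrightarrow> z \<notin> X"
  by (auto simp: Ecal_def)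

lemma pre_Ecal: assumes "X \<in> Ecal m z" shows "pre s X \<in> Ecal m z"
proof -
  have "dom (pid X \<circ>\<^sub>m theta m z s) = pre s X"
    using Ecal_sub[OF assms]
    by (auto simp: dom_def map_comp_def pid_def theta_def Fs_def pre_def split: if_splits)
  moreover have "pid X \<circ>\<^sub>m theta m z s \<in> Hull m z"
    using assms unfolding Ecal_def by (simp add: Hull.comp Hull.gen)
  ultimately show ?thesis using dom_Ecal by force
qed

lemma img_Ecal: assumes "Y \<in> Ecal m z" shows "img s Y \<in> Ecal m z"
proof -
  have "dom (pinv (theta m z s \<circ>\<^sub>m pid Y)) = img s Y"
    unfolding dom_pinv
    by (auto simp: map_comp_def pid_def theta_def Fs_def img_def split: if_splits)
  moreover have "pinv (theta m z s \<circ>\<^sub>m pid Y) \<in> Hull m z"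
    using assms unfolding Ecal_def by (simp add: Hull.inv Hull.comp Hull.gen)
  ultimately show ?thesis using dom_Ecal by force
qed

definition Good :: "'a set \<Rightarrow> bool" where
  "Good X \<longleftrightarrow> (\<forall>t q. m t q \<in> X \<longrightarrow> t \<in> X) \<or>
     (\<exists>a. X \<subseteq> range (m a) \<and> (\<forall>y q. m a (m y q) \<in> X \<longrightarrow> m a y \<in> X))"

lemma Ecal_Good: assumes "X \<in> Ecal m z" shows "Good X"
proof -
  have H: "pid X \<in> Hull m z" using assms unfolding Ecal_def by blast
  obtain a b Y where Y: "\<forall>y q. m y q \<in> Y \<longrightarrow> y \<in> Y" "\<forall>y\<in>Y. mul1 b y \<noteq> z \<and> mul1 a y \<noteq> z"
     "\<forall>x v. pid X x = Some v \<longrightarrow> (\<exists>y\<in>Y. x = mul1 b y \<and> v = mul1 a y)"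
     "\<forall>y\<in>Y. pid X (mul1 b y) = Some (mul1 a y)"
    using InvD[OF Inv_Hull[OF H]] by blast
  have XY: "X = mul1 b ` Y"
  proof
    show "X \<subseteq> mul1 b ` Y"
    proof
      fix x assume "x \<in> X"
      then have "pid X x = Some x" by (simp add: pid_def)
      then show "x \<in> mul1 b ` Y" using Y(3) by blast
    qed
    show "mul1 b ` Y \<subseteq> X"
    proof
      fix x assume "x \<in> mul1 b ` Y"
      then obtain y where "y \<in> Y" "x = mul1 b y" by blast
      then have "pid X x \<noteq> None" using Y(4) by simp
      then show "x \<in> X" by (simp add: pid_def split: if_splits)
    qed
  qed
  show ?thesis
  proof (cases b)
    case None
    then have "X = Y" using XY by simp
    then show ?thesis unfolding Good_def using Y(1) by blast
  next
    case (Some a0)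
    have "X \<subseteq> range (m a0)" using XY Some by auto
    moreover have "\<forall>y q. m a0 (m y q) \<in> X \<longrightarrow> m a0 y \<in> X"
    proof (intro allI impI)
      fix y q assume "m a0 (m y q) \<in> X"
      then obtain y' where y': "y' \<in> Y" "m a0 (m y q) = m a0 y'" using XY Some by auto
      have "m a0 y' \<noteq> z" using Y(2) y'(1) Some by auto
      then have "m y q = y'" using canc y'(2) by metis
      then have "y \<in> Y" using Y(1) y'(1) by blast
      then show "m a0 y \<in> X" using XY Some by auto
    qed
    ultimately show ?thesis unfolding Good_def by blast
  qed
qed


lemma pre_inter: "pre s (X \<inter> Y) = pre s X \<inter> pre s Y"
  unfolding pre_def by blast

lemma img_inter: "img s (X \<inter> Y) = img s X \<inter> img s Y"
proof
  show "img s (X \<inter> Y) \<subseteq> img s X \<inter> img s Y" unfolding img_def by blast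
  show "img s X \<inter> img s Y \<subseteq> img s (X \<inter> Y)"
  proof
    fix v assume "v \<in> img s X \<inter> img s Y"
    then obtain x y where xy: "x \<in> X" "y \<in> Y" "x \<noteq> z" "m s x \<noteq> z" "v = m s x" "v = m s y"
      unfolding img_def by blast
    then have "x = y" using canc by metis
    then show "v \<in> img s (X \<inter> Y)" using xy unfolding img_def by blast
  qed
qed

lemma pre_img: "pre s (img s Y) = Y \<inter> Fs m z s"
proof
  show "pre s (img s Y) \<subseteq> Y \<inter> Fs m z s"
  proof
    fix y assume "y \<in> pre s (img s Y)"
    then obtain y' where y': "y \<noteq> z" "y' \<in> Y" "m s y' \<noteq> z" "m s y = m s y'"
      unfolding pre_def img_def by blast
    then have "y = y'" using canc by metis
    then show "y \<in> Y \<inter> Fs m z s" using y' unfolding Fs_def by blast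
  qed
  show "Y \<inter> Fs m z s \<subseteq> pre s (img s Y)" unfolding pre_def img_def Fs_def by blast
qed

lemma img_pre: assumes "z \<notin> X" shows "img s (pre s X) = X \<inter> Es m z s"
proof
  show "img s (pre s X) \<subseteq> X \<inter> Es m z s"
    unfolding pre_def img_def Es_def principal_def by blast
  show "X \<inter> Es m z s \<subseteq> img s (pre s X)"
  proof
    fix v assume "v \<in> X \<inter> Es m z s"
    then obtain x where x: "v \<in> X" "v = m s x" "v \<noteq> z" unfolding Es_def principal_def by blast
    then have "x \<noteq> z" using zr by metis
    then show "v \<in> img s (pre s X)" using x unfolding pre_def img_def by blast
  qed
qed

lemma pre_Es: "pre s (Es m z s) = Fs m z s"
  unfolding pre_def Es_def Fs_def principal_def by blast

lemma img_Fs: "img s (Fs m z s) = Es m z s"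
proof -
  have "z \<notin> Es m z s" unfolding Es_def by blast
  then have "img s (pre s (Es m z s)) = Es m z s" using img_pre by blast
  then show ?thesis using pre_Es by simp
qed

lemma img_Es: "img s (Es m z p) = Es m z (m s p)"
proof
  show "img s (Es m z p) \<subseteq> Es m z (m s p)"
  proof
    fix v assume "v \<in> img s (Es m z p)"
    then obtain q where "v = m s (m p q)" "v \<noteq> z" unfolding img_def Es_def principal_def by blast
    then show "v \<in> Es m z (m s p)" unfolding Es_def principal_def by (simp add: assoc)
  qed
  show "Es m z (m s p) \<subseteq> img s (Es m z p)"
  proof
    fix v assume "v \<in> Es m z (m s p)"
    then obtain q where q: "v = m s (m p q)" "v \<noteq> z" unfolding Es_def principal_def by (auto simp: assoc)
    then have "m p q \<noteq> z" using zr by metis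
    then show "v \<in> img s (Es m z p)" using q unfolding img_def Es_def principal_def by blast
  qed
qed

lemma pre_Es_sp: "pre s (Es m z (m s p)) \<subseteq> Es m z p"
proof
  fix y assume "y \<in> pre s (Es m z (m s p))"
  then obtain q where q: "y \<noteq> z" "m s y = m s (m p q)" "m s y \<noteq> z"
    unfolding pre_def Es_def principal_def by (auto simp: assoc)
  then have "y = m p q" using canc by metis
  then show "y \<in> Es m z p" using q unfolding Es_def principal_def by blast
qed

lemma Es_z: "Es m z z = {}"
  unfolding Es_def principal_def by (auto simp: zl)

lemma Es_dvd: assumes "sdvd m s t" shows "Es m z t \<subseteq> Es m z s"
proof
  fix v assume "v \<in> Es m z t"
  then obtain q where q: "v = m t q" "v \<noteq> z" unfolding Es_def principal_def by blast
  show "v \<in> Es m z s"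
  proof (cases "t = s")
    case True then show ?thesis using q unfolding Es_def principal_def by blast
  next
    case False
    then obtain x where "t = m s x" using assms unfolding sdvd_def by blast
    then have "v = m s (m x q)" using q by (simp add: assoc)
    then show ?thesis using q unfolding Es_def principal_def by blast
  qed
qed

lemma Es_lcm: assumes "principal m s \<inter> principal m t = principal m r"
  shows "Es m z s \<inter> Es m z t = Es m z r"
  using assms unfolding Es_def by blast

lemma sdvd_refl: "sdvd m s s" unfolding sdvd_def by blast

lemma sdvd_trans: assumes "sdvd m s t" "sdvd m t u" shows "sdvd m s u"
proof (cases "u = t")
  case True then show ?thesis using assms by simp
next
  case False
  then obtain y where y: "u = m t y" using assms(2) unfolding sdvd_def by blast
  show ?thesis
  proof (cases "t = s")
    case True then show ?thesis using y unfolding sdvd_def by blast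
  next
    case False
    then obtain x where "t = m s x" using assms(1) unfolding sdvd_def by blast
    then have "u = m s (m x y)" using y by (simp add: assoc)
    then show ?thesis unfolding sdvd_def by blast
  qed
qed

lemma sdvd_mult: "sdvd m s (m s p)" unfolding sdvd_def by blast

lemma sdvd_mult2: assumes "sdvd m s r" shows "\<exists>y. m r p = m s y"
proof (cases "r = s")
  case True then show ?thesis by blast
next
  case False
  then obtain x where "r = m s x" using assms unfolding sdvd_def by blast
  then have "m r p = m s (m x p)" by (simp add: assoc)
  then show ?thesis by blast
qed

lemma range_sdvd: "v \<in> range (m s) \<Longrightarrow> sdvd m s v" unfolding sdvd_def by blast


lemma c_out: "character m z \<phi> \<Longrightarrow> \<phi> X \<Longrightarrow> X \<in> Ecal m z"
  unfolding character_def by blast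

lemma c_empty: "character m z \<phi> \<Longrightarrow> \<not> \<phi> {}"
  unfolding character_def by blast

lemma c_int: "character m z \<phi> \<Longrightarrow> X \<in> Ecal m z \<Longrightarrow> Y \<in> Ecal m z \<Longrightarrow> \<phi> (X \<inter> Y) = (\<phi> X \<and> \<phi> Y)"
  unfolding character_def by blast

lemma c_mono: assumes "character m z \<phi>" "Y \<in> Ecal m z" "X \<subseteq> Y" "\<phi> X" shows "\<phi> Y"
proof -
  have "X \<in> Ecal m z" using c_out assms by blast
  moreover have "X \<inter> Y = X" using assms(3) by blast
  ultimately show ?thesis using c_int[OF assms(1) _ assms(2)] assms(4) by metis
qed

lemma c_ne: "character m z \<phi> \<Longrightarrow> \<phi> X \<Longrightarrow> X \<noteq> {}"
  using c_empty by blast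

lemma ultra_eq: assumes "ultracharacter m z \<phi>" "character m z \<psi>" "\<forall>X \<in> Ecal m z. \<phi> X \<longrightarrow> \<psi> X"
  shows "\<phi> = \<psi>"
  using assms unfolding ultracharacter_def by blast

definition hatc :: "'a \<Rightarrow> ('a set \<Rightarrow> bool) \<Rightarrow> ('a set \<Rightarrow> bool)" where
  "hatc s \<chi> = (\<lambda>X. X \<in> Ecal m z \<and> \<chi> (pre s X))"

definition backc :: "'a \<Rightarrow> ('a set \<Rightarrow> bool) \<Rightarrow> ('a set \<Rightarrow> bool)" where
  "backc s \<psi> = (\<lambda>Y. Y \<in> Ecal m z \<and> \<psi> (img s Y))"

lemma hat_eq: "hat_theta m z (Some s) \<chi> = hatc s \<chi>"
  unfolding hat_theta_def hatc_def pre_def by simp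

lemma hat_char: assumes "character m z \<chi>" "\<chi> (Fs m z s)" shows "character m z (hatc s \<chi>)"
  unfolding character_def
proof (intro conjI)
  show "\<forall>X. X \<notin> Ecal m z \<longrightarrow> \<not> hatc s \<chi> X" unfolding hatc_def by blast
  show "\<exists>X\<in>Ecal m z. hatc s \<chi> X"
    using Es_Ecal[of s] assms(2) pre_Es[of s] unfolding hatc_def by (intro bexI[of _ "Es m z s"]) auto
  show "\<not> hatc s \<chi> {}" using c_empty[OF assms(1)] unfolding hatc_def pre_def by simp
  show "\<forall>X\<in>Ecal m z. \<forall>Y\<in>Ecal m z. hatc s \<chi> (X \<inter> Y) = (hatc s \<chi> X \<and> hatc s \<chi> Y)"
  proof (intro ballI)
    fix X Y assume XY: "X \<in> Ecal m z" "Y \<in> Ecal m z"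
    have "\<chi> (pre s (X \<inter> Y)) = (\<chi> (pre s X) \<and> \<chi> (pre s Y))"
      unfolding pre_inter using c_int[OF assms(1) pre_Ecal[OF XY(1)] pre_Ecal[OF XY(2)]] .
    then show "hatc s \<chi> (X \<inter> Y) = (hatc s \<chi> X \<and> hatc s \<chi> Y)"
      unfolding hatc_def using Ecal_inter[OF XY] XY by blast
  qed
qed

lemma back_char: assumes "character m z \<psi>" "\<psi> (Es m z s)" shows "character m z (backc s \<psi>)"
  unfolding character_def
proof (intro conjI)
  show "\<forall>X. X \<notin> Ecal m z \<longrightarrow> \<not> backc s \<psi> X" unfolding backc_def by blast
  show "\<exists>X\<in>Ecal m z. backc s \<psi> X"
    using Fs_Ecal[of s] assms(2) img_Fs[of s] unfolding backc_def by (intro bexI[of _ "Fs m z s"]) auto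
  show "\<not> backc s \<psi> {}" using c_empty[OF assms(1)] unfolding backc_def img_def by simp
  show "\<forall>X\<in>Ecal m z. \<forall>Y\<in>Ecal m z. backc s \<psi> (X \<inter> Y) = (backc s \<psi> X \<and> backc s \<psi> Y)"
  proof (intro ballI)
    fix X Y assume XY: "X \<in> Ecal m z" "Y \<in> Ecal m z"
    have "\<psi> (img s (X \<inter> Y)) = (\<psi> (img s X) \<and> \<psi> (img s Y))"
      unfolding img_inter using c_int[OF assms(1) img_Ecal[OF XY(1)] img_Ecal[OF XY(2)]] .
    then show "backc s \<psi> (X \<inter> Y) = (backc s \<psi> X \<and> backc s \<psi> Y)"
      unfolding backc_def using Ecal_inter[OF XY] XY by blast
  qed
qed

lemma hat_back: assumes "character m z \<psi>" "\<psi> (Es m z s)" shows "hatc s (backc s \<psi>) = \<psi>"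
proof
  fix X
  show "hatc s (backc s \<psi>) X = \<psi> X"
  proof (cases "X \<in> Ecal m z")
    case True
    have "img s (pre s X) = X \<inter> Es m z s" using img_pre Ecal_sub[OF True] by blast
    moreover have "\<psi> (X \<inter> Es m z s) = \<psi> X" using c_int[OF assms(1) True Es_Ecal] assms(2) by blast
    ultimately show ?thesis using True pre_Ecal[OF True] unfolding hatc_def backc_def by simp
  next
    case False
    then show ?thesis using c_out[OF assms(1)] unfolding hatc_def by blast
  qed
qed

lemma back_hat: assumes "character m z \<chi>" "\<chi> (Fs m z s)" shows "backc s (hatc s \<chi>) = \<chi>"
proof
  fix X
  show "backc s (hatc s \<chi>) X = \<chi> X"
  proof (cases "X \<in> Ecal m z")
    case True
    have "pre s (img s X) = X \<inter> Fs m z s" using pre_img by blast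
    moreover have "\<chi> (X \<inter> Fs m z s) = \<chi> X" using c_int[OF assms(1) True Fs_Ecal] assms(2) by blast
    ultimately show ?thesis using True img_Ecal[OF True] unfolding hatc_def backc_def by simp
  next
    case False
    then show ?thesis using c_out[OF assms(1)] unfolding backc_def by blast
  qed
qed

lemma ultra_hat: assumes "ultracharacter m z \<chi>" "\<chi> (Fs m z s)" shows "ultracharacter m z (hatc s \<chi>)"
proof -
  have ch: "character m z \<chi>" using assms(1) unfolding ultracharacter_def by blast
  have hc: "character m z (hatc s \<chi>)" using hat_char[OF ch assms(2)] .
  have "hatc s \<chi> = \<psi>'" if p: "character m z \<psi>'" "\<forall>X\<in>Ecal m z. hatc s \<chi> X \<longrightarrow> \<psi>' X" for \<psi>'
  proof -
    have "hatc s \<chi> (Es m z s)" using Es_Ecal[of s] assms(2) pre_Es[of s] unfolding hatc_def by simp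
    then have e: "\<psi>' (Es m z s)" using p(2) Es_Ecal by blast
    have bc: "character m z (backc s \<psi>')" using back_char[OF p(1) e] .
    have "\<forall>Y\<in>Ecal m z. \<chi> Y \<longrightarrow> backc s \<psi>' Y"
    proof (intro ballI impI)
      fix Y assume Y: "Y \<in> Ecal m z" "\<chi> Y"
      then have "backc s (hatc s \<chi>) Y" using back_hat[OF ch assms(2)] by simp
      then have "hatc s \<chi> (img s Y)" unfolding backc_def by blast
      then have "\<psi>' (img s Y)" using p(2) img_Ecal[OF Y(1)] by blast
      then show "backc s \<psi>' Y" using Y(1) unfolding backc_def by blast
    qed
    then have "\<chi> = backc s \<psi>'" using ultra_eq[OF assms(1) bc] by blast
    then show ?thesis using hat_back[OF p(1) e] by simp
  qed
  then show ?thesis unfolding ultracharacter_def using hc by blast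
qed

lemma ultra_back: assumes "ultracharacter m z \<psi>" "\<psi> (Es m z s)" shows "ultracharacter m z (backc s \<psi>)"
proof -
  have ch: "character m z \<psi>" using assms(1) unfolding ultracharacter_def by blast
  have bc: "character m z (backc s \<psi>)" using back_char[OF ch assms(2)] .
  have "backc s \<psi> = \<chi>'" if p: "character m z \<chi>'" "\<forall>X\<in>Ecal m z. backc s \<psi> X \<longrightarrow> \<chi>' X" for \<chi>'
  proof -
    have "backc s \<psi> (Fs m z s)" using Fs_Ecal[of s] assms(2) img_Fs[of s] unfolding backc_def by simp
    then have e: "\<chi>' (Fs m z s)" using p(2) Fs_Ecal by blast
    have hc: "character m z (hatc s \<chi>')" using hat_char[OF p(1) e] .
    have "\<forall>Y\<in>Ecal m z. \<psi> Y \<longrightarrow> hatc s \<chi>' Y"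
    proof (intro ballI impI)
      fix Y assume Y: "Y \<in> Ecal m z" "\<psi> Y"
      then have "hatc s (backc s \<psi>) Y" using hat_back[OF ch assms(2)] by simp
      then have "backc s \<psi> (pre s Y)" unfolding hatc_def by blast
      then have "\<chi>' (pre s Y)" using p(2) pre_Ecal[OF Y(1)] by blast
      then show "hatc s \<chi>' Y" using Y(1) unfolding hatc_def by blast
    qed
    then have "\<psi> = hatc s \<chi>'" using ultra_eq[OF assms(1) hc] by blast
    then show ?thesis using back_hat[OF p(1) e] by simp
  qed
  then show ?thesis unfolding ultracharacter_def using bc by blast
qed

lemma char_string: assumes "character m z \<phi>" "sigma_char m z \<phi> \<noteq> {}"
  shows "is_string m z (sigma_char m z \<phi>)"
  unfolding is_string_def
proof (intro conjI)
  show "sigma_char m z \<phi> \<noteq> {}" by fact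
  show "z \<notin> sigma_char m z \<phi>" using c_empty[OF assms(1)] Es_z unfolding sigma_char_def by simp
  show "\<forall>s t. t \<in> sigma_char m z \<phi> \<and> sdvd m s t \<longrightarrow> s \<in> sigma_char m z \<phi>"
    using c_mono[OF assms(1) Es_Ecal Es_dvd] unfolding sigma_char_def by blast
  show "\<forall>s\<in>sigma_char m z \<phi>. \<forall>t\<in>sigma_char m z \<phi>. \<exists>r\<in>sigma_char m z \<phi>. sdvd m s r \<and> sdvd m t r"
  proof (intro ballI)
    fix s t assume st: "s \<in> sigma_char m z \<phi>" "t \<in> sigma_char m z \<phi>"
    obtain r where r: "principal m s \<inter> principal m t = principal m r" "sdvd m s r" "sdvd m t r"
      using lcm by blast
    have "\<phi> (Es m z s \<inter> Es m z t)" using st c_int[OF assms(1) Es_Ecal Es_Ecal] unfolding sigma_char_def by blast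
    then have "r \<in> sigma_char m z \<phi>" using Es_lcm[OF r(1)] unfolding sigma_char_def by simp
    then show "\<exists>r\<in>sigma_char m z \<phi>. sdvd m s r \<and> sdvd m t r" using r by blast
  qed
qed


lemma str_dir: "is_string m z \<sigma> \<Longrightarrow> s \<in> \<sigma> \<Longrightarrow> t \<in> \<sigma> \<Longrightarrow> \<exists>r\<in>\<sigma>. sdvd m s r \<and> sdvd m t r"
  unfolding is_string_def by blast

lemma str_down: "is_string m z \<sigma> \<Longrightarrow> t \<in> \<sigma> \<Longrightarrow> sdvd m s t \<Longrightarrow> s \<in> \<sigma>"
  unfolding is_string_def by blast

lemma str_nz: "is_string m z \<sigma> \<Longrightarrow> t \<in> \<sigma> \<Longrightarrow> t \<noteq> z"
  unfolding is_string_def by blast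

lemma str_open: "open_string m \<sigma> \<Longrightarrow> s \<in> \<sigma> \<Longrightarrow> \<exists>p. m s p \<in> \<sigma>"
  unfolding open_string_def by blast

lemma phi_sigma: assumes "is_string m z \<sigma>" "open_string m \<sigma>"
  shows "sigma_char m z (phi_str m z \<sigma>) = \<sigma>"
proof
  show "sigma_char m z (phi_str m z \<sigma>) \<subseteq> \<sigma>"
  proof
    fix s assume "s \<in> sigma_char m z (phi_str m z \<sigma>)"
    then have h: "\<forall>t\<in>\<sigma>. \<exists>r\<in>\<sigma> \<inter> Es m z s. sdvd m t r"
      unfolding sigma_char_def phi_str_def by blast
    obtain t where "t \<in> \<sigma>" using assms(1) unfolding is_string_def by blast
    then obtain r where r: "r \<in> \<sigma>" "r \<in> Es m z s" using h by blast
    then have "sdvd m s r" unfolding Es_def principal_def by (auto intro: range_sdvd)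
    then show "s \<in> \<sigma>" using str_down[OF assms(1) r(1)] by blast
  qed
  show "\<sigma> \<subseteq> sigma_char m z (phi_str m z \<sigma>)"
  proof
    fix s assume s: "s \<in> \<sigma>"
    have "\<forall>t\<in>\<sigma>. \<exists>r\<in>\<sigma> \<inter> Es m z s. sdvd m t r"
    proof
      fix t assume t: "t \<in> \<sigma>"
      obtain r where r: "r \<in> \<sigma>" "sdvd m s r" "sdvd m t r" using str_dir[OF assms(1) s t] by blast
      obtain p where p: "m r p \<in> \<sigma>" using str_open[OF assms(2) r(1)] by blast
      obtain y where y: "m r p = m s y" using sdvd_mult2[OF r(2)] by blast
      have "m r p \<in> Es m z s" using y str_nz[OF assms(1) p] unfolding Es_def principal_def by auto
      moreover have "sdvd m t (m r p)" using sdvd_trans[OF r(3) sdvd_mult] .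
      ultimately show "\<exists>r\<in>\<sigma> \<inter> Es m z s. sdvd m t r" using p by blast
    qed
    then show "s \<in> sigma_char m z (phi_str m z \<sigma>)"
      unfolding sigma_char_def phi_str_def using Es_Ecal by blast
  qed
qed

lemma eventual: assumes "is_string m z \<sigma>" "open_string m \<sigma>" "phi_str m z \<sigma> X"
  shows "\<exists>s0\<in>\<sigma>. \<forall>t\<in>\<sigma>. sdvd m s0 t \<longrightarrow> t \<in> X"
proof -
  have XE: "X \<in> Ecal m z" and cof: "\<forall>s\<in>\<sigma>. \<exists>t\<in>\<sigma> \<inter> X. sdvd m s t"
    using assms(3) unfolding phi_str_def by blast+
  obtain t0 where t0: "t0 \<in> \<sigma>" using assms(1) unfolding is_string_def by blast
  have "Good X" using Ecal_Good[OF XE] .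
  then consider (A) "\<forall>t q. m t q \<in> X \<longrightarrow> t \<in> X"
    | (B) a where "X \<subseteq> range (m a)" "\<forall>y q. m a (m y q) \<in> X \<longrightarrow> m a y \<in> X"
    unfolding Good_def by blast
  then show ?thesis
  proof cases
    case A
    have "\<forall>t\<in>\<sigma>. sdvd m t0 t \<longrightarrow> t \<in> X"
    proof (intro ballI impI)
      fix t assume t: "t \<in> \<sigma>"
      then obtain t' where t': "t' \<in> X" "sdvd m t t'" using cof by blast
      show "t \<in> X"
      proof (cases "t' = t")
        case True then show ?thesis using t' by simp
      next
        case False then obtain q where "t' = m t q" using t'(2) unfolding sdvd_def by blast
        then show ?thesis using A t'(1) by blast
      qed
    qed
    then show ?thesis using t0 by blast
  next
    case (B a)
    obtain t1 where t1: "t1 \<in> \<sigma>" "t1 \<in> X" using cof t0 by blast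
    have "sdvd m a t1" using B(1) t1(2) range_sdvd by blast
    then have a: "a \<in> \<sigma>" using str_down[OF assms(1) t1(1)] by blast
    obtain p where p: "m a p \<in> \<sigma>" using str_open[OF assms(2) a] by blast
    have "\<forall>t\<in>\<sigma>. sdvd m (m a p) t \<longrightarrow> t \<in> X"
    proof (intro ballI impI)
      fix t assume t: "t \<in> \<sigma>" "sdvd m (m a p) t"
      obtain y where y: "t = m a y"
      proof (cases "t = m a p")
        case True then show ?thesis using that by blast
      next
        case False
        then obtain x where "t = m (m a p) x" using t(2) unfolding sdvd_def by blast
        then have "t = m a (m p x)" by (simp add: assoc)
        then show ?thesis using that by blast
      qed
      obtain t' where t': "t' \<in> X" "sdvd m t t'" using cof t(1) by blast
      show "t \<in> X"
      proof (cases "t' = t")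
        case True then show ?thesis using t' by simp
      next
        case False then obtain q where "t' = m t q" using t'(2) unfolding sdvd_def by blast
        then have "m a (m y q) \<in> X" using t'(1) y by (simp add: assoc)
        then show ?thesis using B(2) y by blast
      qed
    qed
    then show ?thesis using p by blast
  qed
qed

lemma phi_mono: "phi_str m z \<sigma> X \<Longrightarrow> Y \<in> Ecal m z \<Longrightarrow> X \<subseteq> Y \<Longrightarrow> phi_str m z \<sigma> Y"
  unfolding phi_str_def by blast

lemma phi_char: assumes "is_string m z \<sigma>" "open_string m \<sigma>"
  shows "character m z (phi_str m z \<sigma>)"
  unfolding character_def
proof (intro conjI)
  show "\<forall>X. X \<notin> Ecal m z \<longrightarrow> \<not> phi_str m z \<sigma> X" unfolding phi_str_def by blast
  obtain t0 where t0: "t0 \<in> \<sigma>" using assms(1) unfolding is_string_def by blast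
  then have "phi_str m z \<sigma> (Es m z t0)" using phi_sigma[OF assms] unfolding sigma_char_def by blast
  then show "\<exists>X\<in>Ecal m z. phi_str m z \<sigma> X" using Es_Ecal by blast
  show "\<not> phi_str m z \<sigma> {}" using t0 unfolding phi_str_def by blast
  show "\<forall>X\<in>Ecal m z. \<forall>Y\<in>Ecal m z. phi_str m z \<sigma> (X \<inter> Y) = (phi_str m z \<sigma> X \<and> phi_str m z \<sigma> Y)"
  proof (intro ballI iffI)
    fix X Y assume XY: "X \<in> Ecal m z" "Y \<in> Ecal m z" "phi_str m z \<sigma> (X \<inter> Y)"
    then show "phi_str m z \<sigma> X \<and> phi_str m z \<sigma> Y" using phi_mono[of \<sigma> "X \<inter> Y"] by blast
  next
    fix X Y assume XY: "X \<in> Ecal m z" "Y \<in> Ecal m z" "phi_str m z \<sigma> X \<and> phi_str m z \<sigma> Y"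
    obtain s0 where s0: "s0 \<in> \<sigma>" "\<forall>t\<in>\<sigma>. sdvd m s0 t \<longrightarrow> t \<in> X" using eventual[OF assms] XY by blast
    obtain s1 where s1: "s1 \<in> \<sigma>" "\<forall>t\<in>\<sigma>. sdvd m s1 t \<longrightarrow> t \<in> Y" using eventual[OF assms] XY by blast
    obtain r0 where r0: "r0 \<in> \<sigma>" "sdvd m s0 r0" "sdvd m s1 r0" using str_dir[OF assms(1) s0(1) s1(1)] by blast
    have "\<forall>s\<in>\<sigma>. \<exists>t\<in>\<sigma> \<inter> (X \<inter> Y). sdvd m s t"
    proof
      fix s assume s: "s \<in> \<sigma>"
      obtain r where r: "r \<in> \<sigma>" "sdvd m s r" "sdvd m r0 r" using str_dir[OF assms(1) s r0(1)] by blast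
      have "r \<in> X" using s0(2) r(1) sdvd_trans[OF r0(2) r(3)] by blast
      moreover have "r \<in> Y" using s1(2) r(1) sdvd_trans[OF r0(3) r(3)] by blast
      ultimately show "\<exists>t\<in>\<sigma> \<inter> (X \<inter> Y). sdvd m s t" using r by blast
    qed
    then show "phi_str m z \<sigma> (X \<inter> Y)" unfolding phi_str_def using Ecal_inter[OF XY(1,2)] by blast
  qed
qed

lemma open_le: assumes "character m z \<psi>" "is_string m z (sigma_char m z \<psi>)" "open_string m (sigma_char m z \<psi>)"
  "X \<in> Ecal m z" "\<psi> X"
  shows "phi_str m z (sigma_char m z \<psi>) X"
proof -
  let ?\<sigma> = "sigma_char m z \<psi>"
  have key: "\<exists>q. m t q \<in> X" if t: "t \<in> ?\<sigma>" for t
  proof -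
    have "\<psi> (X \<inter> Es m z t)" using c_int[OF assms(1) assms(4) Es_Ecal] assms(5) t
      unfolding sigma_char_def by blast
    then have "X \<inter> Es m z t \<noteq> {}" using c_ne[OF assms(1)] by blast
    then show ?thesis unfolding Es_def principal_def by blast
  qed
  have "Good X" using Ecal_Good[OF assms(4)] .
  then consider (A) "\<forall>t q. m t q \<in> X \<longrightarrow> t \<in> X"
    | (B) a where "X \<subseteq> range (m a)" "\<forall>y q. m a (m y q) \<in> X \<longrightarrow> m a y \<in> X"
    unfolding Good_def by blast
  then have "\<forall>s\<in>?\<sigma>. \<exists>t\<in>?\<sigma> \<inter> X. sdvd m s t"
  proof cases
    case A
    show ?thesis
    proof
      fix s assume s: "s \<in> ?\<sigma>"
      then have "s \<in> X" using key A by blast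
      then show "\<exists>t\<in>?\<sigma> \<inter> X. sdvd m s t" using s sdvd_refl by blast
    qed
  next
    case (B a)
    have "X \<subseteq> Es m z a" using B(1) Ecal_sub[OF assms(4)] unfolding Es_def principal_def by blast
    then have "\<psi> (Es m z a)" using c_mono[OF assms(1) Es_Ecal _ assms(5)] by blast
    then have a: "a \<in> ?\<sigma>" unfolding sigma_char_def by simp
    show ?thesis
    proof
      fix s assume s: "s \<in> ?\<sigma>"
      obtain r where r: "r \<in> ?\<sigma>" "sdvd m s r" "sdvd m a r" using str_dir[OF assms(2) s a] by blast
      obtain p where p: "m r p \<in> ?\<sigma>" using str_open[OF assms(3) r(1)] by blast
      obtain y where y: "m r p = m a y" using sdvd_mult2[OF r(3)] by blast
      obtain q where "m (m r p) q \<in> X" using key[OF p] by blast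
      then have "m a (m y q) \<in> X" using y by (simp add: assoc)
      then have "m a y \<in> X" using B(2) by blast
      then have "m r p \<in> X" using y by simp
      moreover have "sdvd m s (m r p)" using sdvd_trans[OF r(2) sdvd_mult] .
      ultimately show "\<exists>t\<in>?\<sigma> \<inter> X. sdvd m s t" using p by blast
    qed
  qed
  then show ?thesis unfolding phi_str_def using assms(4) by blast
qed


lemma part1: "{\<phi>. ultracharacter m z \<phi> \<and> open_character m z \<phi>}
           = {phi_str m z \<sigma> | \<sigma>. is_string m z \<sigma> \<and> open_string m \<sigma> \<and> quasi_maximal m z \<sigma>}"
proof
  show "{\<phi>. ultracharacter m z \<phi> \<and> open_character m z \<phi>}
    \<subseteq> {phi_str m z \<sigma> | \<sigma>. is_string m z \<sigma> \<and> open_string m \<sigma> \<and> quasi_maximal m z \<sigma>}"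
  proof
    fix \<phi> assume "\<phi> \<in> {\<phi>. ultracharacter m z \<phi> \<and> open_character m z \<phi>}"
    then have u: "ultracharacter m z \<phi>" and o: "open_character m z \<phi>" by auto
    let ?\<sigma> = "sigma_char m z \<phi>"
    have ch: "character m z \<phi>" and st: "is_string m z ?\<sigma>" and op: "open_string m ?\<sigma>"
      using o unfolding open_character_def by auto
    have "\<forall>X\<in>Ecal m z. \<phi> X \<longrightarrow> phi_str m z ?\<sigma> X" using open_le[OF ch st op] by blast
    then have e: "\<phi> = phi_str m z ?\<sigma>" using ultra_eq[OF u phi_char[OF st op]] by blast
    then have "quasi_maximal m z ?\<sigma>" unfolding quasi_maximal_def using u by simp
    then show "\<phi> \<in> {phi_str m z \<sigma> | \<sigma>. is_string m z \<sigma> \<and> open_string m \<sigma> \<and> quasi_maximal m z \<sigma>}"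
      using e st op by blast
  qed
  show "{phi_str m z \<sigma> | \<sigma>. is_string m z \<sigma> \<and> open_string m \<sigma> \<and> quasi_maximal m z \<sigma>}
    \<subseteq> {\<phi>. ultracharacter m z \<phi> \<and> open_character m z \<phi>}"
  proof
    fix \<phi> assume "\<phi> \<in> {phi_str m z \<sigma> | \<sigma>. is_string m z \<sigma> \<and> open_string m \<sigma> \<and> quasi_maximal m z \<sigma>}"
    then obtain \<sigma> where \<sigma>: "\<phi> = phi_str m z \<sigma>" "is_string m z \<sigma>" "open_string m \<sigma>" "quasi_maximal m z \<sigma>"
      by blast
    have u: "ultracharacter m z \<phi>" using \<sigma> unfolding quasi_maximal_def by simp
    have sc: "sigma_char m z \<phi> = \<sigma>" using phi_sigma[OF \<sigma>(2,3)] \<sigma>(1) by simp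
    have "\<sigma> \<noteq> {}" using \<sigma>(2) unfolding is_string_def by blast
    then have "open_character m z \<phi>" unfolding open_character_def
      using u sc \<sigma>(2,3) unfolding ultracharacter_def by simp
    then show "\<phi> \<in> {\<phi>. ultracharacter m z \<phi> \<and> open_character m z \<phi>}" using u by blast
  qed
qed

lemma part2: "{\<phi>. ultracharacter m z \<phi> \<and> \<not> open_character m z \<phi>}
           = {hat_theta m z u \<phi> | u \<phi>. ground_character m z \<phi> \<and> ultracharacter m z \<phi>
                                      \<and> \<phi> \<in> hatF m z u}"
proof
  show "{\<phi>. ultracharacter m z \<phi> \<and> \<not> open_character m z \<phi>}
    \<subseteq> {hat_theta m z u \<phi> | u \<phi>. ground_character m z \<phi> \<and> ultracharacter m z \<phi> \<and> \<phi> \<in> hatF m z u}"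
  proof
    fix \<psi> assume "\<psi> \<in> {\<phi>. ultracharacter m z \<phi> \<and> \<not> open_character m z \<phi>}"
    then have u: "ultracharacter m z \<psi>" and no: "\<not> open_character m z \<psi>" by auto
    have ch: "character m z \<psi>" using u unfolding ultracharacter_def by blast
    let ?\<sigma> = "sigma_char m z \<psi>"
    show "\<psi> \<in> {hat_theta m z u \<phi> | u \<phi>. ground_character m z \<phi> \<and> ultracharacter m z \<phi> \<and> \<phi> \<in> hatF m z u}"
    proof (cases "?\<sigma> = {}")
      case True
      have "hat_theta m z None \<psi> = \<psi>" unfolding hat_theta_def by simp
      moreover have "ground_character m z \<psi>" unfolding ground_character_def using ch True by simp
      moreover have "\<psi> \<in> hatF m z None" unfolding hatF_def using ch by simp
      ultimately have "\<psi> = hat_theta m z None \<psi> \<and> ground_character m z \<psi> \<and> ultracharacter m z \<psi> \<and> \<psi> \<in> hatF m z None"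
        using u by simp
      then show ?thesis by blast
    next
      case False
      have st: "is_string m z ?\<sigma>" using char_string[OF ch False] .
      have "\<exists>s\<in>?\<sigma>. \<forall>p. m s p \<notin> ?\<sigma>"
      proof (rule ccontr)
        assume "\<not> (\<exists>s\<in>?\<sigma>. \<forall>p. m s p \<notin> ?\<sigma>)"
        then have h: "\<forall>s\<in>?\<sigma>. \<exists>p. m s p \<in> ?\<sigma>" by blast
        have "?\<sigma> = {s. \<exists>p. m s p \<in> ?\<sigma>}"
        proof
          show "?\<sigma> \<subseteq> {s. \<exists>p. m s p \<in> ?\<sigma>}" using h by blast
          show "{s. \<exists>p. m s p \<in> ?\<sigma>} \<subseteq> ?\<sigma>" using str_down[OF st _ sdvd_mult] by blast
        qed
        then have "open_string m ?\<sigma>" unfolding open_string_def .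
        then have "open_character m z \<psi>" unfolding open_character_def using ch False st by blast
        then show False using no by blast
      qed
      then obtain s where s: "s \<in> ?\<sigma>" "\<forall>p. m s p \<notin> ?\<sigma>" by blast
      have es: "\<psi> (Es m z s)" using s(1) unfolding sigma_char_def by simp
      let ?\<phi> = "backc s \<psi>"
      have u2: "ultracharacter m z ?\<phi>" using ultra_back[OF u es] .
      have ch2: "character m z ?\<phi>" using back_char[OF ch es] .
      have "sigma_char m z ?\<phi> = {}"
      proof (rule ccontr)
        assume "sigma_char m z ?\<phi> \<noteq> {}"
        then obtain p where "?\<phi> (Es m z p)" unfolding sigma_char_def by blast
        then have "\<psi> (Es m z (m s p))" unfolding backc_def img_Es by blast
        then show False using s(2) unfolding sigma_char_def by blast
      qed
      then have g: "ground_character m z ?\<phi>" unfolding ground_character_def using ch2 by blast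
      have "?\<phi> (Fs m z s)" unfolding backc_def img_Fs using Fs_Ecal es by blast
      then have hf: "?\<phi> \<in> hatF m z (Some s)" unfolding hatF_def using ch2 by simp
      have "hat_theta m z (Some s) ?\<phi> = \<psi>" unfolding hat_eq using hat_back[OF ch es] .
      then have "\<psi> = hat_theta m z (Some s) ?\<phi> \<and> ground_character m z ?\<phi> \<and> ultracharacter m z ?\<phi> \<and> ?\<phi> \<in> hatF m z (Some s)"
        using g u2 hf by simp
      then show ?thesis by blast
    qed
  qed
  show "{hat_theta m z u \<phi> | u \<phi>. ground_character m z \<phi> \<and> ultracharacter m z \<phi> \<and> \<phi> \<in> hatF m z u}
    \<subseteq> {\<phi>. ultracharacter m z \<phi> \<and> \<not> open_character m z \<phi>}"
  proof
    fix \<psi> assume "\<psi> \<in> {hat_theta m z u \<phi> | u \<phi>. ground_character m z \<phi> \<and> ultracharacter m z \<phi> \<and> \<phi> \<in> hatF m z u}"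
    then obtain u \<phi> where h: "\<psi> = hat_theta m z u \<phi>" "ground_character m z \<phi>" "ultracharacter m z \<phi>"
      "\<phi> \<in> hatF m z u" by blast
    have ch: "character m z \<phi>" and gr: "sigma_char m z \<phi> = {}"
      using h(2) unfolding ground_character_def by auto
    show "\<psi> \<in> {\<phi>. ultracharacter m z \<phi> \<and> \<not> open_character m z \<phi>}"
    proof (cases u)
      case None
      then have "\<psi> = \<phi>" using h(1) unfolding hat_theta_def by simp
      then show ?thesis using h(3) gr unfolding open_character_def by simp
    next
      case (Some s)
      have fs: "\<phi> (Fs m z s)" using h(4) Some unfolding hatF_def by simp
      have e: "\<psi> = hatc s \<phi>" using h(1) Some hat_eq by simp
      have u2: "ultracharacter m z \<psi>" using ultra_hat[OF h(3) fs] e by simp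
      have "\<not> open_character m z \<psi>"
      proof
        assume oc: "open_character m z \<psi>"
        have "hatc s \<phi> (Es m z s)" unfolding hatc_def pre_Es using Es_Ecal fs by blast
        then have "s \<in> sigma_char m z \<psi>" unfolding sigma_char_def e by simp
        moreover have "open_string m (sigma_char m z \<psi>)" using oc unfolding open_character_def by blast
        ultimately obtain p where "m s p \<in> sigma_char m z \<psi>" using str_open by blast
        then have "\<phi> (pre s (Es m z (m s p)))" unfolding sigma_char_def e hatc_def by simp
        then have "\<phi> (Es m z p)" using c_mono[OF ch Es_Ecal pre_Es_sp] by blast
        then show False using gr unfolding sigma_char_def by blast
      qed
      then show ?thesis using u2 by blast
    qed
  qed
qed

end

theorem theorem17p11:
  fixes m :: "'a \<Rightarrow> 'a \<Rightarrow> 'a" and z :: 'a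
  assumes "semigroup_with_zero m z"
    and "zero_left_cancellative m z"
    and "admits_lcm m"
  shows "({\<phi>. ultracharacter m z \<phi> \<and> open_character m z \<phi>}
           = {phi_str m z \<sigma> | \<sigma>. is_string m z \<sigma> \<and> open_string m \<sigma> \<and> quasi_maximal m z \<sigma>})
         \<and> ({\<phi>. ultracharacter m z \<phi> \<and> \<not> open_character m z \<phi>}
           = {hat_theta m z u \<phi> | u \<phi>. ground_character m z \<phi> \<and> ultracharacter m z \<phi>
                                      \<and> \<phi> \<in> hatF m z u})"
proof -
  interpret S0 m z
  proof
    show "\<And>x y w. m (m x y) w = m x (m y w)" using assms(1) unfolding semigroup_with_zero_def by blast
    show "\<And>x. m z x = z" using assms(1) unfolding semigroup_with_zero_def by blast
    show "\<And>x. m x z = z" using assms(1) unfolding semigroup_with_zero_def by blast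
    show "\<And>s t r. m s t = m s r \<Longrightarrow> m s t \<noteq> z \<Longrightarrow> t = r"
      using assms(2) unfolding zero_left_cancellative_def by blast
    show "\<And>s t. \<exists>r. principal m s \<inter> principal m t = principal m r \<and> sdvd m s r \<and> sdvd m t r"
      using assms(3) unfolding admits_lcm_def by blast
  qed
  show ?thesis using part1 part2 by blast
qed

end
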